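(* Let $q\in\mathbb{N}_+$, let $p$ be an odd prime, $n\ge 2$, and let $\sigma\in\mathbb{Z}^{n-1}$ with all entries in $[-\frac{p-1}{2},\frac{p-1}{2}]$ such that $\|\sigma\bmod p\|_q = (p^q-1)^{1/q}$ and $\|k\sigma \bmod p\|_q > \|\sigma\bmod p\|_q$ for every integer $k\not\equiv 0,\pm1 \pmod p$. Let $\vec u = (1,\sigma)\in\mathbb{Z}^n$, $W_i = p\vec e_i$ for $1\le i\le n$, and $\mathcal{L}_+ = \operatorname{span}_{\mathbb{Z}}(W_1,\dots,W_n,\vec u)\subset\mathbb{R}^n$. Then every nonzero $\vec x\in\mathcal{L}_+$ satisfies $\|\vec x\|_q\ge p$, and the vectors of $\mathcal{L}_+$ with $\ell^q$-norm exactly $p$ are precisely $\pm W_1,\dots,\pm W_n,\pm\vec u$.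
   Context: $\|\vec x\|_q = (\sum_i|x_i|^q)^{1/q}$. For real $\alpha$, $|\alpha|_p = \min_{z\in\mathbb{Z}}|\alpha - zp|$, and $\|\vec x\bmod p\|_q = (\sum_i|x_i|_p^q)^{1/q}$. $\vec e_i$ denotes the $i$-th standard unit vector. *)

theory Defs
  imports Complex_Main "HOL-Computational_Algebra.Primes"
begin

text \<open>Vectors in Z^n are represented as integer lists of length n (index 0 .. n-1).\<close>

definition lq_norm :: "nat \<Rightarrow> int list \<Rightarrow> real" where
  "lq_norm q x = (\<Sum>i<length x. \<bar>real_of_int (x ! i)\<bar> ^ q) powr (1 / real q)"

definition abs_mod :: "int \<Rightarrow> real \<Rightarrow> real" where
  "abs_mod p \<alpha> = Inf {\<bar>\<alpha> - real_of_int (z * p)\<bar> | z. True}"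

definition lq_norm_mod :: "nat \<Rightarrow> int \<Rightarrow> int list \<Rightarrow> real" where
  "lq_norm_mod q p x = (\<Sum>i<length x. abs_mod p (real_of_int (x ! i)) ^ q) powr (1 / real q)"

text \<open>p e_i in Z^n (i is 0-based)\<close>
definition scaled_unit :: "nat \<Rightarrow> int \<Rightarrow> nat \<Rightarrow> int list" where
  "scaled_unit n p i = map (\<lambda>j. if j = i then p else 0) [0..<n]"

definition Lplus :: "nat \<Rightarrow> int \<Rightarrow> int list \<Rightarrow> int list set" where
  "Lplus n p u = {x. length x = n \<and>
     (\<exists>(c :: nat \<Rightarrow> int) (k :: int). \<forall>i<n. x ! i = c i * p + k * u ! i)}"

end

theory Submission
  imports Defs
begin


definition am :: "int \<Rightarrow> int \<Rightarrow> int" where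
  "am p a = min (a mod p) (p - a mod p)"

lemma am_le:
  fixes p a z :: int assumes "p > 0" shows "am p a \<le> \<bar>a - z*p\<bar>"
proof -
  define j where "j = a div p - z"
  have e: "a - z*p = a mod p + j*p"
    unfolding j_def using div_mult_mod_eq[of a p] by (simp add: algebra_simps)
  have m0: "0 \<le> a mod p" "a mod p < p" using assms by auto
  show ?thesis
  proof (cases "j \<ge> 0")
    case True
    then have "j*p \<ge> 0" using assms by simp
    then show ?thesis using e m0 unfolding am_def by linarith
  next
    case False
    then have "j*p \<le> -1*p" using assms by (intro mult_right_mono) auto
    then show ?thesis using e m0 unfolding am_def by linarith
  qed
qed

lemma am_att: fixes p a :: int assumes "p>0" shows "\<exists>z. am p a = \<bar>a - z*p\<bar>"
proof (cases "a mod p \<le> p - a mod p")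
  case True
  have "a - (a div p)*p = a mod p" using div_mult_mod_eq[of a p] by (simp add: algebra_simps)
  then show ?thesis using True assms by (intro exI[of _ "a div p"]) (simp add: am_def)
next
  case False
  have "a - (a div p + 1)*p = a mod p - p" using div_mult_mod_eq[of a p] by (simp add: algebra_simps)
  moreover have "a mod p < p" using assms by simp
  ultimately show ?thesis using False by (intro exI[of _ "a div p + 1"]) (simp add: am_def)
qed

lemma abs_mod_am: fixes p a :: int assumes "p > 0"
  shows "abs_mod p (real_of_int a) = real_of_int (am p a)"
proof -
  obtain z0 where z0: "am p a = \<bar>a - z0*p\<bar>" using am_att[OF assms] by blast
  have "Inf {\<bar>real_of_int a - real_of_int (z * p)\<bar> | z. True} = real_of_int (am p a)"
  proof (rule cInf_eq_minimum)
    have "real_of_int (am p a) = \<bar>real_of_int a - real_of_int (z0 * p)\<bar>" using z0 by simp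
    then show "real_of_int (am p a) \<in> {\<bar>real_of_int a - real_of_int (z * p)\<bar> | z. True}"
      by blast
  next
    fix y assume "y \<in> {\<bar>real_of_int a - real_of_int (z * p)\<bar> | z. True}"
    then obtain z where y: "y = \<bar>real_of_int a - real_of_int (z*p)\<bar>" by auto
    have "real_of_int (am p a) \<le> real_of_int \<bar>a - z*p\<bar>" using am_le[OF assms, of a z] by linarith
    then show "real_of_int (am p a) \<le> y" using y by simp
  qed
  then show ?thesis unfolding abs_mod_def .
qed

lemma am_cong: "a mod p = b mod p \<Longrightarrow> am p a = am p b"
  unfolding am_def by simp

lemma am_abs: fixes p a :: int assumes "p > 0" shows "am p a \<le> \<bar>a\<bar>"
  using am_le[OF assms, of a 0] by simp

lemma am_small: fixes p a :: int assumes "p > 0" "\<bar>a\<bar> \<le> (p - 1) div 2"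
  shows "am p a = \<bar>a\<bar>"
proof -
  obtain z where z: "am p a = \<bar>a - z*p\<bar>" using am_att[OF assms(1)] by blast
  have "\<bar>a - z*p\<bar> \<ge> \<bar>a\<bar>"
  proof (cases "z = 0")
    case False
    then have "\<bar>z*p\<bar> \<ge> p" using assms(1) by (simp add: abs_mult)
    moreover have "2 * \<bar>a\<bar> \<le> p - 1" using assms(2) by linarith
    ultimately show ?thesis by linarith
  qed simp
  then show ?thesis using z am_abs[OF assms(1), of a] by linarith
qed

lemma am_pos: fixes p a :: int assumes "p > 0" "\<not> p dvd a" shows "am p a \<ge> 1"
proof -
  have "a mod p \<noteq> 0" using assms(2) by (simp add: dvd_eq_mod_eq_0)
  moreover have "0 \<le> a mod p" "a mod p < p" using assms by auto
  ultimately show ?thesis unfolding am_def by linarith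
qed

lemma am_neg: fixes p a :: int shows "am p (-a) = am p a"
  unfolding am_def by (simp add: zmod_zminus1_eq_if min.commute)

lemma uniq: fixes p a b :: int assumes "p > 0" "\<bar>b\<bar> \<le> (p - 1) div 2"
  "a mod p = b mod p" "\<bar>a\<bar> = \<bar>b\<bar>" shows "a = b"
proof (rule ccontr)
  assume "a \<noteq> b"
  then have "a - b \<noteq> 0" by simp
  moreover have "p dvd (a - b)" using assms(3) by (simp add: mod_eq_dvd_iff)
  ultimately have "\<bar>p\<bar> \<le> \<bar>a - b\<bar>" using dvd_imp_le_int by blast
  then show False using assms by linarith
qed

lemma rp: fixes S :: real assumes "S \<ge> 0" "q \<ge> 1" shows "(S powr (1/real q))^q = S"
proof (cases "S = 0")
  case True then show ?thesis using assms by simp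
next
  case False
  then have "S > 0" using assms by simp
  then have "(S powr (1/real q))^q = (S powr (1/real q)) powr real q"
    by (simp add: powr_realpow)
  also have "\<dots> = S" using assms by (simp add: powr_powr)
  finally show ?thesis .
qed

lemma pr: fixes P :: real assumes "P \<ge> 0" "q \<ge> 1" shows "(P^q) powr (1/real q) = P"
proof (cases "P = 0")
  case True then show ?thesis using assms by simp
next
  case False
  then have "P > 0" using assms by simp
  then have "(P^q) powr (1/real q) = (P powr real q) powr (1/real q)"
    by (simp add: powr_realpow)
  also have "\<dots> = P" using assms by (simp add: powr_powr)
  finally show ?thesis .
qed

lemma L1: fixes S P :: real assumes "S \<ge> 0" "P \<ge> 0" "q \<ge> 1"
  shows "S powr (1/real q) \<ge> P \<longleftrightarrow> S \<ge> P^q"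
proof
  assume "S powr (1/real q) \<ge> P"
  then have "(S powr (1/real q))^q \<ge> P^q" using assms by (intro power_mono) auto
  then show "S \<ge> P^q" using rp[OF assms(1,3)] by simp
next
  assume "S \<ge> P^q"
  then have "S powr (1/real q) \<ge> (P^q) powr (1/real q)" using assms by (intro powr_mono2) auto
  then show "S powr (1/real q) \<ge> P" using pr[OF assms(2,3)] by simp
qed

lemma L2: fixes S P :: real assumes "S \<ge> 0" "P \<ge> 0" "q \<ge> 1"
  shows "S powr (1/real q) = P \<longleftrightarrow> S = P^q"
  using rp[OF assms(1,3)] pr[OF assms(2,3)] by auto

lemma L4: fixes a b :: real assumes "a \<ge> 0" "b \<ge> 0" "q \<ge> 1"
  and "a powr (1/real q) < b powr (1/real q)" shows "a < b"
proof (rule ccontr)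
  assume "\<not> a < b"
  then have "b powr (1/real q) \<le> a powr (1/real q)" using assms by (intro powr_mono2) auto
  then show False using assms(4) by simp
qed

lemma sum_cons: "(\<Sum>i<Suc m. f ((a # xs) ! i)) = f a + (\<Sum>i<m. f (xs ! i))"
  by (simp only: sum.lessThan_Suc_shift nth_Cons_0 nth_Cons_Suc)



lemma am_nonneg: fixes p a :: int assumes "p > 0" shows "am p a \<ge> 0"
  using pos_mod_bound[OF assms, of a] pos_mod_sign[OF assms, of a] unfolding am_def by (simp add: min_def)

lemma modlem: fixes c p k a :: int shows "(c*p + k*a) mod p = ((k mod p) * a) mod p"
  by (simp add: mod_mult_left_eq)

theorem lemma4p4:
  fixes q n :: nat and p :: int and \<sigma> :: "int list"
  assumes "q \<ge> 1" and "prime p" and "odd p" and "n \<ge> 2"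
    and "length \<sigma> = n - 1"
    and "\<forall>i<n - 1. - ((p - 1) div 2) \<le> \<sigma> ! i \<and> \<sigma> ! i \<le> (p - 1) div 2"
    and "lq_norm_mod q p \<sigma> = (real_of_int p ^ q - 1) powr (1 / real q)"
    and "\<forall>k::int. k mod p \<noteq> 0 \<and> k mod p \<noteq> 1 \<and> k mod p \<noteq> (-1) mod p \<longrightarrow>
           lq_norm_mod q p (map (\<lambda>s. k * s) \<sigma>) > lq_norm_mod q p \<sigma>"
  shows "(\<forall>x\<in>Lplus n p (1 # \<sigma>). x \<noteq> replicate n 0 \<longrightarrow> lq_norm q x \<ge> real_of_int p)
       \<and> {x \<in> Lplus n p (1 # \<sigma>). lq_norm q x = real_of_int p}
         = {scaled_unit n p i | i. i < n} \<union> {map uminus (scaled_unit n p i) | i. i < n}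
           \<union> {1 # \<sigma>, map uminus (1 # \<sigma>)}"
proof -
  define u where "u = 1 # \<sigma>"
  define R where "R = {scaled_unit n p i | i. i < n} \<union> {map uminus (scaled_unit n p i) | i. i < n}
           \<union> {u, map uminus u}"
  obtain m where nm: "n = Suc m" using assms(4) by (cases n) auto
  have lens: "length \<sigma> = m" using assms(5) nm by simp
  have p2: "p \<ge> 2" using assms(2) prime_ge_2_int by blast
  have p3: "p \<ge> 3" using p2 assms(3) by (cases "p = 2") auto
  have p0: "p > 0" using p2 by simp
  have lenu: "length u = n" using lens nm u_def by simp
  have ub: "\<bar>u!i\<bar> \<le> (p-1) div 2" if "i < n" for i
  proof (cases i)
    case 0 then show ?thesis using p3 u_def by simp
  next
    case (Suc j) then show ?thesis using assms(6) that nm u_def by auto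
  qed
  define Sq where "Sq x = (\<Sum>i<length x. \<bar>real_of_int (x!i)\<bar>^q)" for x
  have lq: "lq_norm q x = Sq x powr (1/real q)" for x unfolding lq_norm_def Sq_def by simp
  have Sq0: "Sq x \<ge> 0" for x unfolding Sq_def by (intro sum_nonneg) auto
  have pq1: "real_of_int p ^ q \<ge> 1" using p0 by (intro one_le_power) simp
  define B where "B = (\<Sum>i<m. real_of_int (am p (\<sigma>!i))^q)"
  have B0: "B \<ge> 0" unfolding B_def using am_nonneg[OF p0] by (intro sum_nonneg) simp
  have lmB: "lq_norm_mod q p \<sigma> = B powr (1/real q)"
    unfolding lq_norm_mod_def B_def lens using abs_mod_am[OF p0] by simp
  have B: "B = real_of_int p ^ q - 1"
  proof -
    have "B = (B powr (1/real q))^q" using rp[OF B0 assms(1)] by simp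
    also have "\<dots> = ((real_of_int p ^ q - 1) powr (1/real q))^q" using lmB assms(7) by simp
    also have "\<dots> = real_of_int p ^ q - 1" using rp[OF _ assms(1)] pq1 by simp
    finally show ?thesis .
  qed
  have Bs: "B = (\<Sum>i<m. \<bar>real_of_int (\<sigma>!i)\<bar>^q)"
    unfolding B_def
  proof (rule sum.cong)
    fix i assume "i \<in> {..<m}"
    then have "\<bar>u!(Suc i)\<bar> \<le> (p-1) div 2" using ub nm by simp
    then have "am p (\<sigma>!i) = \<bar>\<sigma>!i\<bar>" using am_small[OF p0] u_def by simp
    then show "real_of_int (am p (\<sigma>!i))^q = \<bar>real_of_int (\<sigma>!i)\<bar>^q" by simp
  qed simp
  have Su: "Sq u = real_of_int p ^ q"
    unfolding Sq_def lenu unfolding nm u_def by (subst sum_cons[where f="\<lambda>a. \<bar>real_of_int a\<bar>^q"]) (simp add: Bs[symmetric] B)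
  define T where "T k = (\<Sum>i<n. real_of_int (am p (k * u!i))^q)" for k
  have big: "T k > real_of_int p ^ q" if k: "k mod p \<noteq> 0" "k mod p \<noteq> 1" "k mod p \<noteq> (-1) mod p" for k
  proof -
    define Sm where "Sm = (\<Sum>i<m. real_of_int (am p (k * \<sigma>!i))^q)"
    have Sm0: "Sm \<ge> 0" unfolding Sm_def using am_nonneg[OF p0] by (intro sum_nonneg) simp
    have "lq_norm_mod q p (map (\<lambda>s. k * s) \<sigma>) = Sm powr (1/real q)"
      unfolding lq_norm_mod_def Sm_def lens using abs_mod_am[OF p0] lens by (simp flip: of_int_mult)
    moreover have "lq_norm_mod q p (map (\<lambda>s. k * s) \<sigma>) > lq_norm_mod q p \<sigma>" using assms(8) k by blast
    ultimately have "Sm powr (1/real q) > B powr (1/real q)" using lmB by simp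
    then have SmB: "Sm > B" using L4[OF B0 Sm0 assms(1)] by blast
    have "\<not> p dvd k" using k(1) by (simp add: dvd_eq_mod_eq_0)
    then have "am p k \<ge> 1" using am_pos[OF p0] by blast
    then have a1: "real_of_int (am p k)^q \<ge> 1" by (intro one_le_power) simp
    have "T k = real_of_int (am p k)^q + Sm"
      unfolding T_def Sm_def nm u_def
      using sum_cons[where f="\<lambda>a. real_of_int (am p (k*a))^q" and m=m and a=1 and xs=\<sigma>] by simp
    then show ?thesis using a1 SmB B by simp
  qed
  have inL: "x \<in> Lplus n p u \<longleftrightarrow> length x = n \<and> (\<exists>(c :: nat \<Rightarrow> int) (k :: int). \<forall>i<n. x ! i = c i * p + k * u ! i)" for x
    unfolding Lplus_def by simp
  have tgt: "Sq x \<ge> real_of_int p ^ q \<and> (Sq x = real_of_int p ^ q \<longrightarrow> x = v)"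
    if "length x = n" "length v = n" "\<forall>i<n. x!i mod p = v!i mod p"
       "\<forall>i<n. \<bar>v!i\<bar> \<le> (p-1) div 2" "Sq v = real_of_int p ^ q" for x v
  proof -
    have pt: "\<bar>v!i\<bar> \<le> \<bar>x!i\<bar>" if "i < n" for i
    proof -
      have "am p (x!i) = am p (v!i)" using am_cong \<open>i<n\<close> \<open>\<forall>i<n. x!i mod p = v!i mod p\<close> by blast
      moreover have "am p (v!i) = \<bar>v!i\<bar>" using am_small[OF p0] \<open>i<n\<close> \<open>\<forall>i<n. \<bar>v!i\<bar> \<le> (p-1) div 2\<close> by blast
      ultimately show ?thesis using am_abs[OF p0, of "x!i"] by simp
    qed
    have ptr: "\<bar>real_of_int (v!i)\<bar>^q \<le> \<bar>real_of_int (x!i)\<bar>^q" if "i < n" for i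
      using pt[OF that] by (intro power_mono) (simp_all flip: of_int_abs)
    have ge: "Sq v \<le> Sq x" unfolding Sq_def using that(1,2) ptr by (simp, intro sum_mono) simp
    have "x = v" if eq: "Sq x = real_of_int p ^ q"
    proof (rule nth_equalityI)
      show "length x = length v" using \<open>length x = n\<close> \<open>length v = n\<close> by simp
      fix i assume "i < length x"
      then have i: "i < n" using \<open>length x = n\<close> by simp
      have "(\<Sum>j<n. \<bar>real_of_int (x!j)\<bar>^q - \<bar>real_of_int (v!j)\<bar>^q) = Sq x - Sq v"
        unfolding Sq_def using \<open>length x = n\<close> \<open>length v = n\<close> by (simp add: sum_subtractf)
      also have "\<dots> = 0" using eq \<open>Sq v = real_of_int p ^ q\<close> by simp
      finally have "\<forall>j\<in>{..<n}. \<bar>real_of_int (x!j)\<bar>^q - \<bar>real_of_int (v!j)\<bar>^q = 0"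
        using ptr by (subst sum_nonneg_eq_0_iff[symmetric]) auto
      then have "\<bar>real_of_int (x!i)\<bar>^q = \<bar>real_of_int (v!i)\<bar>^q" using i by auto
      then have "\<bar>real_of_int (x!i)\<bar> = \<bar>real_of_int (v!i)\<bar>"
        using assms(1) power_eq_iff_eq_base[of q "\<bar>real_of_int (x!i)\<bar>" "\<bar>real_of_int (v!i)\<bar>"] by auto
      then have "\<bar>x!i\<bar> = \<bar>v!i\<bar>" by linarith
      then show "x!i = v!i" using uniq[OF p0] i \<open>\<forall>i<n. x!i mod p = v!i mod p\<close> \<open>\<forall>i<n. \<bar>v!i\<bar> \<le> (p-1) div 2\<close> by blast
    qed
    then show ?thesis using ge \<open>Sq v = real_of_int p ^ q\<close> by auto
  qed
  have core: "Sq x \<ge> real_of_int p ^ q \<and> (Sq x = real_of_int p ^ q \<longrightarrow> x \<in> R)"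
    if xL: "x \<in> Lplus n p u" and nz: "x \<noteq> replicate n 0" for x
  proof -
    obtain c k where lx: "length x = n" and xc: "\<forall>i<n. x ! i = c i * p + k * u ! i"
      using xL inL by blast
    have xm: "x!i mod p = ((k mod p) * u!i) mod p" if "i < n" for i
      using xc that modlem by simp
    have lowT: "Sq x \<ge> T k"
      unfolding Sq_def T_def lx
    proof (rule sum_mono)
      fix i assume "i \<in> {..<n}"
      then have "am p (x!i) = am p (k * u!i)" using xm by (intro am_cong) (simp add: mod_mult_left_eq)
      then have "am p (k * u!i) \<le> \<bar>x!i\<bar>" using am_abs[OF p0, of "x!i"] by simp
      moreover have "am p (k * u!i) \<ge> 0" using am_nonneg[OF p0] by simp
      ultimately show "real_of_int (am p (k * u!i))^q \<le> \<bar>real_of_int (x!i)\<bar>^q"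
        by (intro power_mono) (simp_all flip: of_int_abs)
    qed
    consider "k mod p = 0" | "k mod p = 1" | "k mod p = (-1) mod p"
      | "k mod p \<noteq> 0 \<and> k mod p \<noteq> 1 \<and> k mod p \<noteq> (-1) mod p" by blast
    then show ?thesis
    proof cases
      case 1
      have dv: "p dvd x!i" if "i < n" for i
      proof -
        have "x!i mod p = 0" using xm[OF that] 1 by simp
        then show ?thesis by (simp add: dvd_eq_mod_eq_0)
      qed
      obtain j where j: "j < n" "x!j \<noteq> 0"
      proof -
        have "\<exists>j<n. x!j \<noteq> 0"
        proof (rule ccontr)
          assume "\<not> (\<exists>j<n. x!j \<noteq> 0)"
          then have "x = replicate n 0" using lx by (intro nth_equalityI) auto
          then show False using nz by simp
        qed
        then show ?thesis using that by blast
      qed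
      have pj: "\<bar>p\<bar> \<le> \<bar>x!j\<bar>" using dvd_imp_le_int j dv by blast
      then have pjr: "real_of_int p ^ q \<le> \<bar>real_of_int (x!j)\<bar>^q"
        using p0 by (intro power_mono) (simp_all flip: of_int_abs)
      have split: "Sq x = \<bar>real_of_int (x!j)\<bar>^q + (\<Sum>i\<in>{..<n}-{j}. \<bar>real_of_int (x!i)\<bar>^q)"
        unfolding Sq_def lx using j by (simp add: sum.remove)
      have rest0: "(\<Sum>i\<in>{..<n}-{j}. \<bar>real_of_int (x!i)\<bar>^q) \<ge> 0" by (intro sum_nonneg) auto
      have "x \<in> R" if eq: "Sq x = real_of_int p ^ q"
      proof -
        have "(\<Sum>i\<in>{..<n}-{j}. \<bar>real_of_int (x!i)\<bar>^q) = 0" using split eq pjr rest0 by linarith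
        then have z: "\<forall>i\<in>{..<n}-{j}. \<bar>real_of_int (x!i)\<bar>^q = 0"
          by (subst sum_nonneg_eq_0_iff[symmetric]) auto
        have zi: "x!i = 0" if "i < n" "i \<noteq> j" for i using z that by auto
        have "\<bar>real_of_int (x!j)\<bar>^q = real_of_int p ^ q" using split eq pjr rest0 by linarith
        then have "\<bar>real_of_int (x!j)\<bar> = real_of_int p"
          using assms(1) p0 power_eq_iff_eq_base[of q "\<bar>real_of_int (x!j)\<bar>" "real_of_int p"] by auto
        then have "\<bar>x!j\<bar> = p" by linarith
        then consider "x!j = p" | "x!j = -p" by linarith
        then show ?thesis
        proof cases
          case 1
          have "x = scaled_unit n p j"
            using lx zi 1 by (intro nth_equalityI) (auto simp: scaled_unit_def)
          then show ?thesis unfolding R_def using j by blast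
        next
          case 2
          have "x = map uminus (scaled_unit n p j)"
            using lx zi 2 by (intro nth_equalityI) (auto simp: scaled_unit_def)
          then show ?thesis unfolding R_def using j by blast
        qed
      qed
      then show ?thesis using split pjr rest0 by linarith
    next
      case 2
      have "\<forall>i<n. x!i mod p = u!i mod p" using xm 2 by simp
      then have "Sq x \<ge> real_of_int p ^ q \<and> (Sq x = real_of_int p ^ q \<longrightarrow> x = u)"
        using tgt[of x u] lx lenu ub Su by blast
      then show ?thesis unfolding R_def by blast
    next
      case 3
      have "\<forall>i<n. x!i mod p = (map uminus u)!i mod p"
        proof (intro allI impI)
        fix i assume "i < n"
        have "((-1) mod p * u!i) mod p = ((-1) * u!i) mod p" by (rule mod_mult_left_eq)
        then show "x!i mod p = (map uminus u)!i mod p" using xm[OF \<open>i<n\<close>] 3 lenu \<open>i<n\<close> by simp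
      qed
      moreover have "Sq (map uminus u) = Sq u" unfolding Sq_def by simp
      ultimately have "Sq x \<ge> real_of_int p ^ q \<and> (Sq x = real_of_int p ^ q \<longrightarrow> x = map uminus u)"
        using tgt[of x "map uminus u"] lx lenu ub Su by simp
      then show ?thesis unfolding R_def by blast
    next
      case 4
      then have "T k > real_of_int p ^ q" using big by blast
      then have "Sq x > real_of_int p ^ q" using lowT by linarith
      then show ?thesis by simp
    qed
  qed
  have Ppos: "real_of_int p \<ge> 0" using p0 by simp
  have part1: "\<forall>x\<in>Lplus n p u. x \<noteq> replicate n 0 \<longrightarrow> lq_norm q x \<ge> real_of_int p"
  proof (intro ballI impI)
    fix x assume "x \<in> Lplus n p u" "x \<noteq> replicate n 0"
    then have "Sq x \<ge> real_of_int p ^ q" using core by blast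
    then show "lq_norm q x \<ge> real_of_int p" unfolding lq using L1[OF Sq0 Ppos assms(1)] by blast
  qed
  have part2: "{x \<in> Lplus n p u. lq_norm q x = real_of_int p} = R"
  proof
    show "{x \<in> Lplus n p u. lq_norm q x = real_of_int p} \<subseteq> R"
    proof
      fix x assume "x \<in> {x \<in> Lplus n p u. lq_norm q x = real_of_int p}"
      then have xL: "x \<in> Lplus n p u" and e: "Sq x = real_of_int p ^ q"
        using lq L2[OF Sq0 Ppos assms(1)] by auto
      have "x \<noteq> replicate n 0"
      proof
        assume "x = replicate n 0"
        then have "Sq x = 0" unfolding Sq_def using assms(1) by simp
        then show False using e pq1 by linarith
      qed
      then show "x \<in> R" using core xL e by blast
    qed
  next
    have su: "scaled_unit n p j \<in> Lplus n p u \<and> Sq (scaled_unit n p j) = real_of_int p ^ q" if "j < n" for j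
    proof
      show "scaled_unit n p j \<in> Lplus n p u" unfolding inL
        by (auto simp: scaled_unit_def intro!: exI[of _ "\<lambda>i. if i = j then 1 else 0"] exI[of _ 0])
      have "Sq (scaled_unit n p j) = (\<Sum>i<n. if i = j then real_of_int p ^ q else 0)"
        unfolding Sq_def scaled_unit_def using assms(1) p0 by (intro sum.cong) auto
      also have "\<dots> = real_of_int p ^ q" using that by simp
      finally show "Sq (scaled_unit n p j) = real_of_int p ^ q" .
    qed
    have nsu: "map uminus (scaled_unit n p j) \<in> Lplus n p u" if "j < n" for j
      unfolding inL
      by (auto simp: scaled_unit_def intro!: exI[of _ "\<lambda>i. if i = j then -1 else 0"] exI[of _ 0])
    have uL: "u \<in> Lplus n p u" unfolding inL using lenu by (auto intro!: exI[of _ "\<lambda>i. 0"] exI[of _ 1])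
    have nuL: "map uminus u \<in> Lplus n p u" unfolding inL using lenu by (auto intro!: exI[of _ "\<lambda>i. 0"] exI[of _ "-1"])
    have Snu: "Sq (map uminus u) = Sq u" unfolding Sq_def by simp
    have Snsu: "Sq (map uminus (scaled_unit n p j)) = Sq (scaled_unit n p j)" for j
      unfolding Sq_def by simp
    have "\<forall>x\<in>R. x \<in> Lplus n p u \<and> Sq x = real_of_int p ^ q"
      unfolding R_def using su nsu uL nuL Snu Su Snsu by auto
    then show "R \<subseteq> {x \<in> Lplus n p u. lq_norm q x = real_of_int p}"
      using lq L2[OF Sq0 Ppos assms(1)] by auto
  qed
  show ?thesis using part1 part2 unfolding u_def R_def by simp
qed

end
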